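(* Let $(X,\|\cdot\|)$ be a normed linear space, let $I$ be a non-trivial admissible ideal in $\mathbb{N}$, let $x=\{x_k\}_{k\in\mathbb{N}}$ be a sequence in $X$ and let $r>0$. Then the set $I\text{-}st\text{-}\mathrm{LIM}_x^r$ is closed in $X$.
   Context: An ideal $I$ in $\mathbb{N}$ is a family of subsets of $\mathbb{N}$ containing $\emptyset$, closed under finite unions and under taking subsets; it is non-trivial if $\mathbb{N}\notin I$ and admissible if $\{n\}\in I$ for every $n$. For $r\ge0$, $x$ is $r$-$I$-statistically convergent to $\xi\in X$ if for every $\varepsilon>0$ and $\delta>0$, $\{n\in\mathbb{N}:\frac1n|\{k\le n:\|x_k-\xi\|\ge r+\varepsilon\}|\ge\delta\}\in I$; $I\text{-}st\text{-}\mathrm{LIM}_x^r$ is the set of all such $\xi$. *)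

theory Defs
  imports "HOL-Analysis.Analysis"
begin

definition is_ideal :: "nat set set \<Rightarrow> bool" where
  "is_ideal I \<longleftrightarrow> {} \<in> I \<and> (\<forall>A\<in>I. \<forall>B\<in>I. A \<union> B \<in> I) \<and> (\<forall>A\<in>I. \<forall>B. B \<subseteq> A \<longrightarrow> B \<in> I)"

definition nontrivial_ideal :: "nat set set \<Rightarrow> bool" where
  "nontrivial_ideal I \<longleftrightarrow> UNIV \<notin> I"

definition admissible_ideal :: "nat set set \<Rightarrow> bool" where
  "admissible_ideal I \<longleftrightarrow> (\<forall>n. {n} \<in> I)"

text \<open>r-I-statistical convergence: for every eps>0, delta>0,
  {n : (1/n) |{k \<le> n : norm (x k - xi) \<ge> r + eps}| \<ge> delta} \<in> I.
  Terms are indexed k = 1..n (the paper's N = {1,2,...}).\<close>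
definition r_I_stat_conv ::
  "nat set set \<Rightarrow> real \<Rightarrow> (nat \<Rightarrow> 'a::real_normed_vector) \<Rightarrow> 'a \<Rightarrow> bool" where
  "r_I_stat_conv I r x \<xi> \<longleftrightarrow>
     (\<forall>\<epsilon>>0. \<forall>\<delta>>0.
        {n. (1 / real n) * real (card {k \<in> {1..n}. norm (x k - \<xi>) \<ge> r + \<epsilon>}) \<ge> \<delta>} \<in> I)"

definition I_st_LIM ::
  "nat set set \<Rightarrow> real \<Rightarrow> (nat \<Rightarrow> 'a::real_normed_vector) \<Rightarrow> 'a set" where
  "I_st_LIM I r x = {\<xi>. r_I_stat_conv I r x \<xi>}"

end

theory Submission
  imports Defs
begin

theorem theorem3p3:
  fixes I :: "nat set set" and x :: "nat \<Rightarrow> 'a::real_normed_vector" and r :: real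
  assumes "is_ideal I" and "nontrivial_ideal I" and "admissible_ideal I"
    and "r > 0"
  shows "closed (I_st_LIM I r x)"
proof -
  have sub: "\<And>A B. A \<in> I \<Longrightarrow> B \<subseteq> A \<Longrightarrow> B \<in> I" using assms(1) unfolding is_ideal_def by blast
  have "closure (I_st_LIM I r x) \<subseteq> I_st_LIM I r x"
  proof
    fix \<xi> assume "\<xi> \<in> closure (I_st_LIM I r x)"
    hence ap: "\<forall>e>0. \<exists>y\<in>I_st_LIM I r x. dist y \<xi> < e" by (simp add: closure_approachable)
    show "\<xi> \<in> I_st_LIM I r x"
      unfolding I_st_LIM_def r_I_stat_conv_def mem_Collect_eq
    proof (intro allI impI)
      fix \<epsilon> \<delta> :: real assume e: "\<epsilon> > 0" and d: "\<delta> > 0"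
      obtain y where y: "y \<in> I_st_LIM I r x" and dy: "dist y \<xi> < \<epsilon>/2"
        using ap e by (meson half_gt_zero)
      have yin: "{n. (1 / real n) * real (card {k \<in> {1..n}. norm (x k - y) \<ge> r + \<epsilon>/2}) \<ge> \<delta>} \<in> I"
        using y e d unfolding I_st_LIM_def r_I_stat_conv_def by simp
      show "{n. (1 / real n) * real (card {k \<in> {1..n}. norm (x k - \<xi>) \<ge> r + \<epsilon>}) \<ge> \<delta>} \<in> I"
      proof (rule sub[OF yin], safe)
        fix n assume h: "\<delta> \<le> 1 / real n * real (card {k \<in> {1..n}. r + \<epsilon> \<le> norm (x k - \<xi>)})"
        have ss: "{k \<in> {1..n}. r + \<epsilon> \<le> norm (x k - \<xi>)} \<subseteq> {k \<in> {1..n}. r + \<epsilon>/2 \<le> norm (x k - y)}"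
        proof safe
          fix k assume "r + \<epsilon> \<le> norm (x k - \<xi>)"
          moreover have "norm (x k - \<xi>) \<le> norm (x k - y) + norm (y - \<xi>)"
            by (metis diff_add_cancel norm_triangle_ineq add_diff_eq)
          moreover have "norm (y - \<xi>) < \<epsilon>/2" using dy by (simp add: dist_norm)
          ultimately show "r + \<epsilon>/2 \<le> norm (x k - y)" by linarith
        qed
        have "card {k \<in> {1..n}. r + \<epsilon> \<le> norm (x k - \<xi>)} \<le> card {k \<in> {1..n}. r + \<epsilon>/2 \<le> norm (x k - y)}"
          by (rule card_mono[OF _ ss]) simp
        hence "1 / real n * real (card {k \<in> {1..n}. r + \<epsilon> \<le> norm (x k - \<xi>)}) \<le> 1 / real n * real (card {k \<in> {1..n}. r + \<epsilon>/2 \<le> norm (x k - y)})"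
          by (intro mult_left_mono) auto
        thus "\<delta> \<le> 1 / real n * real (card {k \<in> {1..n}. r + \<epsilon>/2 \<le> norm (x k - y)})" using h by linarith
      qed
    qed
  qed
  thus ?thesis by (simp add: closure_subset_eq)
qed

end
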